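(* Let $\widetilde\gamma$ be a Kähler metric on $\widetilde M_2$ (with respect to the complex structure inherited from $\mathbb{H}^2\times\mathbb{H}^2$) which is invariant under the group $G=PL(2,\mathbb{R})\times\{\mathrm{Id},P\}$. Then there exists a smooth function $A:(0,\infty)\to\mathbb{R}$ such that $$\widetilde\gamma=A_1(s)\,ds^2+A_2(s)\,\sigma_1^2+A_3(s)\,\sigma_2^2+A_4(s)\,\sigma_3^2,$$ where $$A_1=\frac{1}{8\sinh(s/2)}\frac{d}{ds}\Big(\frac{A(s)}{\cosh(s/2)}\Big),\quad A_2=A(s),\quad A_3=2\sinh(s/2)\frac{d}{ds}\Big(\frac{A(s)}{\cosh(s/2)}\Big),\quad A_4=\frac{A(s)}{\cosh^2(s/2)}.$$
   Context: $\mathbb{H}^2=\{x+iy\in\mathbb{C}:y>0\}$ is the upper half plane. $\widetilde M_2=\mathbb{H}^2\times\mathbb{H}^2\setminus\{(z,z):z\in\mathbb{H}^2\}$, a complex manifold with coordinates $(z_1,z_2)$. $PL(2,\mathbb{R})$ denotes the group of real $2\times2$ matrices of positive determinant modulo nonzero scalars (equivalently $SL(2,\mathbb{R})/\{\pm I\}$), acting on $\mathbb{H}^2$ by $M\odot z=(az+b)/(cz+d)$ for $M=\begin{pmatrix}a&b\\c&d\end{pmatrix}$, and on $\widetilde M_2$ diagonally: $(z_1,z_2)\mapsto(M\odot z_1,M\odot z_2)$. $P:(z_1,z_2)\mapsto(z_2,z_1)$. For $s>0$ put $w_s=(ie^{s/2},ie^{-s/2})$; the map $(0,\infty)\times PL(2,\mathbb{R})\to\widetilde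 M_2$, $(s,g)\mapsto g\cdot w_s$, is a diffeomorphism, and we use $(s,g)$ as coordinates. Let $e_1=\begin{pmatrix}0&1\\1&0\end{pmatrix}$, $e_2=\begin{pmatrix}0&1\\-1&0\end{pmatrix}$, $e_3=\begin{pmatrix}1&0\\0&-1\end{pmatrix}$ be a basis of the Lie algebra of $PL(2,\mathbb{R})$, and let $\sigma_1,\sigma_2,\sigma_3$ be the left-invariant 1-forms on $PL(2,\mathbb{R})$ dual to the corresponding left-invariant vector fields, pulled back to $\widetilde M_2$ via the coordinates $(s,g)$. Juxtaposition of 1-forms means symmetric tensor product. *)

theory Defs
  imports "HOL-Analysis.Analysis"
begin

fun Ck_on :: "nat \<Rightarrow> 'a::euclidean_space set \<Rightarrow> ('a \<Rightarrow> real) \<Rightarrow> bool" where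
  "Ck_on 0 S f = continuous_on S f"
| "Ck_on (Suc k) S f =
     ((\<forall>x\<in>S. f differentiable (at x)) \<and>
      (\<forall>i\<in>Basis. Ck_on k S (\<lambda>x. frechet_derivative f (at x) i)))"

definition smooth_on :: "'a::euclidean_space set \<Rightarrow> ('a \<Rightarrow> real) \<Rightarrow> bool" where
  "smooth_on S f \<longleftrightarrow> (\<forall>k. Ck_on k S f)"

definition H2 :: "complex set" where
  "H2 = {z. Im z > 0}"

definition M2 :: "(complex \<times> complex) set" where
  "M2 = {(z1, z2). z1 \<in> H2 \<and> z2 \<in> H2 \<and> z1 \<noteq> z2}"

definition mob :: "real^2^2 \<Rightarrow> complex \<Rightarrow> complex" where
  "mob M z = (of_real (M$1$1) * z + of_real (M$1$2)) / (of_real (M$2$1) * z + of_real (M$2$2))"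

definition act :: "real^2^2 \<Rightarrow> complex \<times> complex \<Rightarrow> complex \<times> complex" where
  "act M p = (mob M (fst p), mob M (snd p))"

definition swapP :: "complex \<times> complex \<Rightarrow> complex \<times> complex" where
  "swapP p = (snd p, fst p)"

text \<open>Complex structure inherited from H2 x H2.\<close>
definition Jc :: "complex \<times> complex \<Rightarrow> complex \<times> complex" where
  "Jc u = (\<i> * fst u, \<i> * snd u)"

text \<open>A metric tensor field: at each point a real bilinear form on the tangent space C x C.\<close>
definition riemannian_metric :: "(complex \<times> complex) set \<Rightarrow>
    (complex \<times> complex \<Rightarrow> complex \<times> complex \<Rightarrow> complex \<times> complex \<Rightarrow> real) \<Rightarrow> bool" where
  "riemannian_metric S g \<longleftrightarrow>
     (\<forall>p\<in>S. bilinear (g p)) \<and>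
     (\<forall>p\<in>S. \<forall>u v. g p u v = g p v u) \<and>
     (\<forall>p\<in>S. \<forall>u. u \<noteq> 0 \<longrightarrow> g p u u > 0) \<and>
     (\<forall>b\<in>Basis. \<forall>b'\<in>Basis. smooth_on S (\<lambda>p. g p b b'))"

text \<open>Kaehler form omega(u,v) = g(Ju,v), and exterior derivative of a 2-form
  evaluated on constant vector fields (whose brackets vanish).\<close>
definition kform where
  "kform g p u v = g p (Jc u) v"

definition d2form ::
  "(complex \<times> complex \<Rightarrow> complex \<times> complex \<Rightarrow> complex \<times> complex \<Rightarrow> real) \<Rightarrow>
   complex \<times> complex \<Rightarrow> complex \<times> complex \<Rightarrow> complex \<times> complex \<Rightarrow> complex \<times> complex \<Rightarrow> real" where
  "d2form w p u v x =
     frechet_derivative (\<lambda>q. w q v x) (at p) u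
   + frechet_derivative (\<lambda>q. w q x u) (at p) v
   + frechet_derivative (\<lambda>q. w q u v) (at p) x"

definition kaehler_metric :: "(complex \<times> complex) set \<Rightarrow>
    (complex \<times> complex \<Rightarrow> complex \<times> complex \<Rightarrow> complex \<times> complex \<Rightarrow> real) \<Rightarrow> bool" where
  "kaehler_metric S g \<longleftrightarrow>
     riemannian_metric S g \<and>
     (\<forall>p\<in>S. \<forall>u v. g p (Jc u) (Jc v) = g p u v) \<and>
     (\<forall>p\<in>S. \<forall>u v x. d2form (kform g) p u v x = 0)"

text \<open>Invariance under G = PL(2,R) x {Id, P}: pullback of g under each group element
  equals g. PL(2,R) is represented by real matrices of positive determinant.\<close>
definition G_invariant ::
  "(complex \<times> complex \<Rightarrow> complex \<times> complex \<Rightarrow> complex \<times> complex \<Rightarrow> real) \<Rightarrow> bool" where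
  "G_invariant g \<longleftrightarrow>
     (\<forall>M::real^2^2. det M > 0 \<longrightarrow> (\<forall>p\<in>M2. \<forall>u v.
        g (act M p) (frechet_derivative (act M) (at p) u) (frechet_derivative (act M) (at p) v)
        = g p u v)) \<and>
     (\<forall>p\<in>M2. \<forall>u v. g (swapP p) (swapP u) (swapP v) = g p u v)"

definition wpt :: "real \<Rightarrow> complex \<times> complex" where
  "wpt s = (\<i> * of_real (exp (s/2)), \<i> * of_real (exp (-s/2)))"

definition Phi :: "real \<Rightarrow> real^2^2 \<Rightarrow> complex \<times> complex" where
  "Phi s M = act M (wpt s)"

definition e1 :: "real^2^2" where "e1 = vector [vector [0, 1], vector [1, 0]]"
definition e2 :: "real^2^2" where "e2 = vector [vector [0, 1], vector [-1, 0]]"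
definition e3 :: "real^2^2" where "e3 = vector [vector [1, 0], vector [0, -1]]"

text \<open>Image under d Phi at (s,M) of the tangent vector tau d/ds + a X1 + b X2 + c X3,
  where Xi is the left-invariant vector field generated by ei (its value at M is M ** ei).
  Hence ds, sigma1, sigma2, sigma3 evaluate on it to tau, a, b, c.\<close>
definition dPhi :: "real \<Rightarrow> real^2^2 \<Rightarrow> real \<Rightarrow> real \<Rightarrow> real \<Rightarrow> real \<Rightarrow> complex \<times> complex" where
  "dPhi s M tau a b c =
     vector_derivative
       (\<lambda>t. Phi (s + t * tau) (M ** (mat 1 + t *\<^sub>R (a *\<^sub>R e1 + b *\<^sub>R e2 + c *\<^sub>R e3)))) (at 0)"

end

theory Submission
  imports Defs
begin



lemma frechet_derivative_cong_open:
  assumes "open S" "x \<in> S" "\<And>y. y \<in> S \<Longrightarrow> f y = g y"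
  shows "frechet_derivative f (at x) = frechet_derivative g (at x)"
proof -
  have "(f has_derivative f') (at x) \<longleftrightarrow> (g has_derivative f') (at x)" for f'
  proof
    assume "(f has_derivative f') (at x)"
    then show "(g has_derivative f') (at x)"
      by (rule has_derivative_transform_within_open[OF _ assms(1,2)]) (simp add: assms(3))
  next
    assume "(g has_derivative f') (at x)"
    then show "(f has_derivative f') (at x)"
      by (rule has_derivative_transform_within_open[OF _ assms(1,2)]) (simp add: assms(3))
  qed
  thus ?thesis unfolding frechet_derivative_def by simp
qed

lemma differentiable_cong_open:
  assumes "open S" "x \<in> S" "\<And>y. y \<in> S \<Longrightarrow> f y = g y"
  shows "f differentiable (at x) \<longleftrightarrow> g differentiable (at x)"
proof -
  have "(f has_derivative f') (at x) \<longleftrightarrow> (g has_derivative f') (at x)" for f'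
  proof
    assume "(f has_derivative f') (at x)"
    then show "(g has_derivative f') (at x)"
      by (rule has_derivative_transform_within_open[OF _ assms(1,2)]) (simp add: assms(3))
  next
    assume "(g has_derivative f') (at x)"
    then show "(f has_derivative f') (at x)"
      by (rule has_derivative_transform_within_open[OF _ assms(1,2)]) (simp add: assms(3))
  qed
  thus ?thesis unfolding differentiable_def by simp
qed
lemma Ck_on_cong:
  assumes "open S" "\<And>y. y \<in> S \<Longrightarrow> f y = g y"
  shows "Ck_on k S f = Ck_on k S g"
  using assms(2)
proof (induction k arbitrary: f g)
  case 0
  have "continuous_on S f = continuous_on S g"
    by (rule continuous_on_cong[OF refl]) (simp add: 0)
  then show ?case by simp
next
  case (Suc k)
  have d0: "x \<in> S \<Longrightarrow> f differentiable (at x) \<longleftrightarrow> g differentiable (at x)" for x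
    by (rule differentiable_cong_open[OF assms(1)]) (auto simp: Suc.prems)
  have d: "(\<forall>x\<in>S. f differentiable (at x)) = (\<forall>x\<in>S. g differentiable (at x))"
    using d0 by blast
  have e: "Ck_on k S (\<lambda>x. frechet_derivative f (at x) i) = Ck_on k S (\<lambda>x. frechet_derivative g (at x) i)" for i
    by (rule Suc.IH) (rule arg_cong[where f="\<lambda>h. h i"], rule frechet_derivative_cong_open[OF assms(1)], auto simp: Suc.prems)
  show ?case by (simp only: Ck_on.simps d e)
qed

lemma Ck_on_Suc_imp: "Ck_on (Suc k) S f \<Longrightarrow> Ck_on k S f"
proof (induction k arbitrary: f)
  case 0
  then show ?case
    by (simp add: continuous_at_imp_continuous_on differentiable_imp_continuous_within)
next
  case (Suc k)
  then show ?case by auto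
qed

lemma frechet_real_one:
  fixes f :: "real \<Rightarrow> real"
  assumes "f differentiable (at x)"
  shows "frechet_derivative f (at x) 1 = deriv f x"
proof -
  have "(f has_real_derivative deriv f x) (at x)"
    using assms DERIV_deriv_iff_real_differentiable by blast
  hence "(f has_derivative (*) (deriv f x)) (at x)" by (simp add: has_field_derivative_def)
  hence "frechet_derivative f (at x) = (*) (deriv f x)" by (rule frechet_derivative_at[symmetric])
  thus ?thesis by simp
qed

lemma Ck_real_Suc:
  fixes f :: "real \<Rightarrow> real"
  assumes "open T"
  shows "Ck_on (Suc k) T f \<longleftrightarrow> (\<forall>x\<in>T. f differentiable (at x)) \<and> Ck_on k T (deriv f)"
proof -
  have "(\<forall>x\<in>T. f differentiable (at x)) \<Longrightarrow>
      Ck_on k T (\<lambda>x. frechet_derivative f (at x) 1) = Ck_on k T (deriv f)"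
    by (rule Ck_on_cong[OF assms]) (simp add: frechet_real_one)
  thus ?thesis by (auto simp: Basis_real_def)
qed

lemma Ck_const: "open T \<Longrightarrow> Ck_on k T (\<lambda>x::real. c::real)"
proof (induction k arbitrary: c)
  case 0 thus ?case by simp
next
  case (Suc k)
  have "deriv (\<lambda>x::real. c) = (\<lambda>x. 0)" by (rule ext) simp
  then show ?case using Suc by (simp add: Ck_real_Suc)
qed

lemma Ck_add:
  fixes f g :: "real \<Rightarrow> real"
  assumes "open T"
  shows "Ck_on k T f \<Longrightarrow> Ck_on k T g \<Longrightarrow> Ck_on k T (\<lambda>x. f x + g x)"
proof (induction k arbitrary: f g)
  case 0 thus ?case by (auto intro: continuous_on_add)
next
  case (Suc k)
  hence df: "\<forall>x\<in>T. f differentiable (at x)" and dg: "\<forall>x\<in>T. g differentiable (at x)"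
    and cf: "Ck_on k T (deriv f)" and cg: "Ck_on k T (deriv g)"
    using Ck_real_Suc[OF assms] by auto
  have e: "\<And>x. x \<in> T \<Longrightarrow> deriv (\<lambda>x. f x + g x) x = deriv f x + deriv g x"
  proof -
    fix x assume "x \<in> T"
    hence "(f has_real_derivative deriv f x) (at x)" "(g has_real_derivative deriv g x) (at x)"
      using df dg DERIV_deriv_iff_real_differentiable by blast+
    thus "deriv (\<lambda>x. f x + g x) x = deriv f x + deriv g x"
      by (intro DERIV_imp_deriv) (auto intro!: derivative_eq_intros)
  qed
  have "Ck_on k T (\<lambda>x. deriv f x + deriv g x)" using Suc.IH cf cg by blast
  hence "Ck_on k T (deriv (\<lambda>x. f x + g x))" using Ck_on_cong[OF assms e] by simp
  thus ?case unfolding Ck_real_Suc[OF assms] using df dg by auto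
qed

lemma Ck_mult:
  fixes f g :: "real \<Rightarrow> real"
  assumes "open T"
  shows "Ck_on k T f \<Longrightarrow> Ck_on k T g \<Longrightarrow> Ck_on k T (\<lambda>x. f x * g x)"
proof (induction k arbitrary: f g)
  case 0 thus ?case by (auto intro: continuous_on_mult)
next
  case (Suc k)
  hence df: "\<forall>x\<in>T. f differentiable (at x)" and dg: "\<forall>x\<in>T. g differentiable (at x)"
    and cf: "Ck_on k T (deriv f)" and cg: "Ck_on k T (deriv g)"
    using Ck_real_Suc[OF assms] by auto
  have f0: "Ck_on k T f" "Ck_on k T g" using Suc.prems Ck_on_Suc_imp by blast+
  have e: "\<And>x. x \<in> T \<Longrightarrow> deriv (\<lambda>x. f x * g x) x = deriv f x * g x + f x * deriv g x"
  proof -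
    fix x assume "x \<in> T"
    hence "(f has_real_derivative deriv f x) (at x)" "(g has_real_derivative deriv g x) (at x)"
      using df dg DERIV_deriv_iff_real_differentiable by blast+
    thus "deriv (\<lambda>x. f x * g x) x = deriv f x * g x + f x * deriv g x"
      by (intro DERIV_imp_deriv) (auto intro!: derivative_eq_intros)
  qed
  have "Ck_on k T (\<lambda>x. deriv f x * g x + f x * deriv g x)"
    by (rule Ck_add[OF assms]) (use Suc.IH cf cg f0 in blast)+
  hence "Ck_on k T (deriv (\<lambda>x. f x * g x))" using Ck_on_cong[OF assms e] by simp
  thus ?case unfolding Ck_real_Suc[OF assms] using df dg by auto
qed

lemma Ck_sum:
  fixes f :: "'b \<Rightarrow> real \<Rightarrow> real"
  assumes "open T" "finite B" "\<And>b. b \<in> B \<Longrightarrow> Ck_on k T (f b)"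
  shows "Ck_on k T (\<lambda>x. \<Sum>b\<in>B. f b x)"
  using assms(2,3)
proof (induction B rule: finite_induct)
  case empty thus ?case by (simp add: Ck_const[OF assms(1)])
next
  case (insert b B)
  thus ?case by (simp add: Ck_add[OF assms(1)])
qed

lemma DERIV_imp_differentiable:
  "(f has_real_derivative D) (at x) \<Longrightarrow> f differentiable (at x)"
  by (auto simp: differentiable_def dest: has_field_derivative_imp_has_derivative)

lemma Ck_exp: "open T \<Longrightarrow> Ck_on k T (\<lambda>x::real. exp (c * x))"
proof (induction k)
  case 0 thus ?case by (auto intro!: continuous_intros)
next
  case (Suc k)
  have "deriv (\<lambda>x::real. exp (c * x)) = (\<lambda>x. c * exp (c * x))"
    by (rule ext, rule DERIV_imp_deriv) (auto intro!: derivative_eq_intros)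
  moreover have "Ck_on k T (\<lambda>x. c * exp (c * x))"
    using Suc Ck_mult Ck_const by blast
  moreover have "(\<lambda>x::real. exp (c * x)) differentiable (at x)" for x
    by (rule DERIV_imp_differentiable) (auto intro!: derivative_eq_intros)
  ultimately show ?case unfolding Ck_real_Suc[OF Suc.prems] by auto
qed

lemma Ck_chain:
  fixes f :: "'a::euclidean_space \<Rightarrow> real" and \<phi> :: "real \<Rightarrow> 'a"
  assumes oS: "open S" and oT: "open T" and im: "\<phi> ` T \<subseteq> S"
    and d\<phi>: "\<And>x. x \<in> T \<Longrightarrow> (\<phi> has_vector_derivative \<phi>' x) (at x)"
    and c\<phi>: "\<And>b j. b \<in> Basis \<Longrightarrow> Ck_on j T (\<lambda>x. \<phi>' x \<bullet> b)"
  shows "Ck_on k S f \<Longrightarrow> Ck_on k T (\<lambda>x. f (\<phi> x))"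
proof (induction k arbitrary: f)
  case 0
  have "continuous_on T \<phi>"
    using d\<phi> by (auto intro!: continuous_at_imp_continuous_on dest: has_vector_derivative_continuous)
  then show ?case using 0 im by (auto intro: continuous_on_compose2)
next
  case (Suc k)
  from Suc.prems have df: "\<forall>y\<in>S. f differentiable (at y)"
    and cf: "\<forall>i\<in>Basis. Ck_on k S (\<lambda>y. frechet_derivative f (at y) i)" by auto
  have key: "((\<lambda>x. f (\<phi> x)) has_real_derivative
      (\<Sum>b\<in>Basis. (\<phi>' x \<bullet> b) * frechet_derivative f (at (\<phi> x)) b)) (at x)" if x: "x \<in> T" for x
  proof -
    let ?F = "frechet_derivative f (at (\<phi> x))"
    have hf: "(f has_derivative ?F) (at (\<phi> x))" using df x im frechet_derivative_works by blast
    have h\<phi>: "(\<phi> has_derivative (\<lambda>h. h *\<^sub>R \<phi>' x)) (at x)"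
      using d\<phi>[OF x] by (simp add: has_vector_derivative_def)
    have c: "((\<lambda>x. f (\<phi> x)) has_derivative (\<lambda>h. ?F (h *\<^sub>R \<phi>' x))) (at x)"
      using diff_chain_at[OF h\<phi> hf] by (simp add: o_def)
    have lin: "linear ?F" using hf has_derivative_linear by blast
    have q: "?F (h *\<^sub>R \<phi>' x) = (\<Sum>b\<in>Basis. (\<phi>' x \<bullet> b) * ?F b) * h" for h
    proof -
      have "?F (h *\<^sub>R \<phi>' x) = h * ?F (\<phi>' x)" using linear_scale[OF lin] by simp
      also have "?F (\<phi>' x) = ?F (\<Sum>b\<in>Basis. (\<phi>' x \<bullet> b) *\<^sub>R b)" by (simp add: euclidean_representation)
      also have "\<dots> = (\<Sum>b\<in>Basis. (\<phi>' x \<bullet> b) * ?F b)"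
        by (simp add: linear_sum[OF lin] linear_scale[OF lin])
      finally show ?thesis by simp
    qed
    have "(\<lambda>h. ?F (h *\<^sub>R \<phi>' x)) = (*) (\<Sum>b\<in>Basis. (\<phi>' x \<bullet> b) * ?F b)"
      by (rule ext) (simp only: q mult.commute)
    with c show ?thesis by (simp add: has_field_derivative_def)
  qed
  have dd: "\<forall>x\<in>T. (\<lambda>x. f (\<phi> x)) differentiable (at x)"
    using key DERIV_imp_differentiable by blast
  have e: "deriv (\<lambda>x. f (\<phi> x)) x = (\<Sum>b\<in>Basis. (\<phi>' x \<bullet> b) * frechet_derivative f (at (\<phi> x)) b)"
    if "x \<in> T" for x using key[OF that] by (rule DERIV_imp_deriv)
  have "Ck_on k T (\<lambda>x. \<Sum>b\<in>Basis. (\<phi>' x \<bullet> b) * frechet_derivative f (at (\<phi> x)) b)"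
    by (rule Ck_sum[OF oT]) (auto intro!: Ck_mult[OF oT] c\<phi> Suc.IH cf[rule_format])
  hence "Ck_on k T (deriv (\<lambda>x. f (\<phi> x)))" using Ck_on_cong[OF oT e] by simp
  thus ?case unfolding Ck_real_Suc[OF oT] using dd by auto
qed




definition den :: "real^2^2 \<Rightarrow> complex \<Rightarrow> complex" where
  "den M z = of_real (M$2$1) * z + of_real (M$2$2)"

definition dmob :: "real^2^2 \<Rightarrow> complex \<Rightarrow> complex" where
  "dmob M z = of_real (det M) / (den M z)^2"

definition Lact :: "real^2^2 \<Rightarrow> complex \<times> complex \<Rightarrow> complex \<times> complex \<Rightarrow> complex \<times> complex" where
  "Lact M p h = (dmob M (fst p) * fst h, dmob M (snd p) * snd h)"

lemma den_nonzero:
  assumes "det M > 0" "Im z > 0"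
  shows "den M z \<noteq> 0"
proof
  assume h: "den M z = 0"
  hence "Im (den M z) = 0" by simp
  hence c: "M$2$1 = 0" using assms(2) by (simp add: den_def)
  have "Re (den M z) = 0" using h by simp
  hence "M$2$2 = 0" using c by (simp add: den_def)
  thus False using c assms(1) by (simp add: det_2)
qed

lemma mob_deriv:
  assumes "den M z \<noteq> 0"
  shows "(mob M has_field_derivative dmob M z) (at z)"
proof -
  have "((\<lambda>w. (of_real (M$1$1) * w + of_real (M$1$2)) / (of_real (M$2$1) * w + of_real (M$2$2)))
     has_field_derivative dmob M z) (at z)"
    using assms
    by (auto intro!: derivative_eq_intros simp: den_def dmob_def det_2 field_simps power2_eq_square)
  thus ?thesis unfolding mob_def[abs_def] .
qed

lemma act_has_derivative:
  assumes "den M (fst p) \<noteq> 0" "den M (snd p) \<noteq> 0"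
  shows "(act M has_derivative Lact M p) (at p)"
proof -
  have 1: "((\<lambda>q. mob M (fst q)) has_derivative (\<lambda>h. dmob M (fst p) * fst h)) (at p)"
    using has_derivative_compose[OF has_derivative_fst[OF has_derivative_ident]
        has_field_derivative_imp_has_derivative[OF mob_deriv[OF assms(1)]]] by simp
  have 2: "((\<lambda>q. mob M (snd q)) has_derivative (\<lambda>h. dmob M (snd p) * snd h)) (at p)"
    using has_derivative_compose[OF has_derivative_snd[OF has_derivative_ident]
        has_field_derivative_imp_has_derivative[OF mob_deriv[OF assms(2)]]] by simp
  show ?thesis using has_derivative_Pair[OF 1 2]
    by (simp add: act_def[abs_def] Lact_def[abs_def])
qed

lemma M2_den:
  assumes "det M > 0" "p \<in> M2"
  shows "den M (fst p) \<noteq> 0" "den M (snd p) \<noteq> 0"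
  using assms den_nonzero by (auto simp: M2_def H2_def)

lemma invariance:
  assumes G: "G_invariant \<gamma>" and "det M > 0" "p \<in> M2"
  shows "\<gamma> (act M p) (Lact M p v) (Lact M p w) = \<gamma> p v w"
proof -
  have "frechet_derivative (act M) (at p) = Lact M p"
    using frechet_derivative_at[OF act_has_derivative[OF M2_den[OF assms(2,3)]]] by simp
  thus ?thesis using G assms(2,3) unfolding G_invariant_def by metis
qed


lemma Xentries:
  fixes a b c :: real
  defines "X \<equiv> a *\<^sub>R e1 + b *\<^sub>R e2 + c *\<^sub>R e3"
  shows "X$1$1 = c" "X$1$2 = a + b" "X$2$1 = a - b" "X$2$2 = - c"
  by (simp_all add: X_def e1_def e2_def e3_def)

lemma Mentries:
  fixes M X :: "real^2^2"
  shows "(M ** (mat 1 + t *\<^sub>R X))$i$j = M$i$j + t * (M$i$1 * X$1$j + M$i$2 * X$2$j)"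
proof -
  have "j = 1 \<or> j = 2" by (rule exhaust_2)
  thus ?thesis by (auto simp add: matrix_matrix_mult_def sum_2 mat_def algebra_simps)
qed

lemma quot_ident:
  fixes a b c d z z' x11 x12 x21 x22 :: complex
  assumes "c * z + d \<noteq> 0"
  shows "((a * x11 + b * x21) * z + a * z' + (a * x12 + b * x22)) * (c * z + d)
        - (a * z + b) * ((c * x11 + d * x21) * z + c * z' + (c * x12 + d * x22))
       = (a * d - b * c) * (z' + x12 + (x11 - x22) * z - x21 * z^2)"
  by (simp add: algebra_simps power2_eq_square)


lemma comp_deriv:
  fixes m11 m12 m21 m22 x11 x12 x21 x22 :: real and Zf :: "complex \<Rightarrow> complex"
  assumes Z: "(Zf has_field_derivative Z') (at 0)" and Z0: "Zf 0 = z"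
    and dn: "of_real m21 * z + of_real m22 \<noteq> 0"
  shows "((\<lambda>w. ((of_real m11 + w * of_real (m11*x11 + m12*x21)) * Zf w + (of_real m12 + w * of_real (m11*x12 + m12*x22)))
            / ((of_real m21 + w * of_real (m21*x11 + m22*x21)) * Zf w + (of_real m22 + w * of_real (m21*x12 + m22*x22))))
      has_field_derivative
      (of_real (m11*m22 - m12*m21) / (of_real m21 * z + of_real m22)^2
        * (Z' + of_real x12 + of_real (x11 - x22) * z - of_real x21 * z^2))) (at 0)"
proof -
  define P11 where "P11 = (of_real (m11*x11 + m12*x21) :: complex)"
  define P12 where "P12 = (of_real (m11*x12 + m12*x22) :: complex)"
  define P21 where "P21 = (of_real (m21*x11 + m22*x21) :: complex)"
  define P22 where "P22 = (of_real (m21*x12 + m22*x22) :: complex)"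
  have N: "((\<lambda>w. (of_real m11 + w * P11) * Zf w + (of_real m12 + w * P12)) has_field_derivative
      (P11 * z + of_real m11 * Z' + P12)) (at 0)"
    by (auto intro!: derivative_eq_intros Z simp: Z0)
  have D: "((\<lambda>w. (of_real m21 + w * P21) * Zf w + (of_real m22 + w * P22)) has_field_derivative
      (P21 * z + of_real m21 * Z' + P22)) (at 0)"
    by (auto intro!: derivative_eq_intros Z simp: Z0)
  have Q: "((\<lambda>w. ((of_real m11 + w * P11) * Zf w + (of_real m12 + w * P12)) /
      ((of_real m21 + w * P21) * Zf w + (of_real m22 + w * P22))) has_field_derivative
      ((P11 * z + of_real m11 * Z' + P12) * (of_real m21 * z + of_real m22)
        - (of_real m11 * z + of_real m12) * (P21 * z + of_real m21 * Z' + P22))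
       / ((of_real m21 * z + of_real m22) * (of_real m21 * z + of_real m22))) (at 0)"
    using DERIV_divide[OF N D] dn by (simp add: Z0)
  have e: "(P11 * z + of_real m11 * Z' + P12) * (of_real m21 * z + of_real m22)
        - (of_real m11 * z + of_real m12) * (P21 * z + of_real m21 * Z' + P22)
      = of_real (m11*m22 - m12*m21) * (Z' + of_real x12 + of_real (x11 - x22) * z - of_real x21 * z^2)"
    using quot_ident[OF dn, of "of_real m11" "of_real x11" "of_real m12" "of_real x21" Z' "of_real x12" "of_real x22"]
    by (simp add: P11_def P12_def P21_def P22_def)
  have t: "((P11 * z + of_real m11 * Z' + P12) * (of_real m21 * z + of_real m22)
        - (of_real m11 * z + of_real m12) * (P21 * z + of_real m21 * Z' + P22))
       / ((of_real m21 * z + of_real m22) * (of_real m21 * z + of_real m22))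
     = of_real (m11*m22 - m12*m21) / (of_real m21 * z + of_real m22)^2
        * (Z' + of_real x12 + of_real (x11 - x22) * z - of_real x21 * z^2)"
    unfolding e by (simp add: power2_eq_square)
  show ?thesis using Q[unfolded t] unfolding P11_def P12_def P21_def P22_def .
qed

definition vk :: "real \<Rightarrow> real \<Rightarrow> real \<Rightarrow> complex \<Rightarrow> complex \<Rightarrow> complex" where
  "vk a b c z z' = z' + of_real (a + b) + of_real (2 * c) * z - of_real (a - b) * z^2"

definition Vv :: "real \<Rightarrow> real \<Rightarrow> real \<Rightarrow> real \<Rightarrow> real \<Rightarrow> complex \<times> complex" where
  "Vv s tau a b c = (vk a b c (fst (wpt s)) (fst (wpt s) * of_real (tau/2)),
                     vk a b c (snd (wpt s)) (- snd (wpt s) * of_real (tau/2)))"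

lemma wpt_H2: "Im (fst (wpt s)) > 0" "Im (snd (wpt s)) > 0"
  by (simp_all add: wpt_def)

lemma dPhi_has:
  assumes "det M > 0"
  shows "((\<lambda>t. Phi (s + t * tau) (M ** (mat 1 + t *\<^sub>R (a *\<^sub>R e1 + b *\<^sub>R e2 + c *\<^sub>R e3))))
     has_vector_derivative Lact M (wpt s) (Vv s tau a b c)) (at 0)"
proof -
  define X where "X = a *\<^sub>R e1 + b *\<^sub>R e2 + c *\<^sub>R e3"
  have X: "X$1$1 = c" "X$1$2 = a + b" "X$2$1 = a - b" "X$2$2 = - c"
    unfolding X_def by (rule Xentries)+
  define Z1 where "Z1 = (\<lambda>w::complex. \<i> * exp ((of_real s + w * of_real tau) / 2))"
  define Z2 where "Z2 = (\<lambda>w::complex. \<i> * exp (- (of_real s + w * of_real tau) / 2))"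
  define F :: "(complex \<Rightarrow> complex) \<Rightarrow> complex \<Rightarrow> complex" where "F = (\<lambda>Zf w. ((of_real (M$1$1) + w * of_real (M$1$1*X$1$1 + M$1$2*X$2$1)) * Zf w
       + (of_real (M$1$2) + w * of_real (M$1$1*X$1$2 + M$1$2*X$2$2)))
            / ((of_real (M$2$1) + w * of_real (M$2$1*X$1$1 + M$2$2*X$2$1)) * Zf w
       + (of_real (M$2$2) + w * of_real (M$2$1*X$1$2 + M$2$2*X$2$2))))"
  have z1: "Z1 0 = fst (wpt s)" and z2: "Z2 0 = snd (wpt s)"
    by (simp_all add: Z1_def Z2_def wpt_def flip: exp_of_real)
  have dz1: "(Z1 has_field_derivative (fst (wpt s) * of_real (tau/2))) (at 0)"
    unfolding Z1_def wpt_def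
    by (auto intro!: derivative_eq_intros simp flip: exp_of_real)
  have dz2: "(Z2 has_field_derivative (- snd (wpt s) * of_real (tau/2))) (at 0)"
    unfolding Z2_def wpt_def
    by (auto intro!: derivative_eq_intros simp flip: exp_of_real)
  have dn1: "of_real (M$2$1) * fst (wpt s) + of_real (M$2$2) \<noteq> 0"
    using den_nonzero[OF assms wpt_H2(1)] by (simp add: den_def)
  have dn2: "of_real (M$2$1) * snd (wpt s) + of_real (M$2$2) \<noteq> 0"
    using den_nonzero[OF assms wpt_H2(2)] by (simp add: den_def)
  have D1: "(F Z1 has_field_derivative dmob M (fst (wpt s)) * vk a b c (fst (wpt s)) (fst (wpt s) * of_real (tau/2))) (at 0)"
    using comp_deriv[OF dz1 z1 dn1, of "M$1$1" "X$1$1" "M$1$2" "X$2$1" "X$1$2" "X$2$2"]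
    unfolding F_def dmob_def vk_def den_def det_2 X by (simp add: algebra_simps)
  have D2: "(F Z2 has_field_derivative dmob M (snd (wpt s)) * vk a b c (snd (wpt s)) (- snd (wpt s) * of_real (tau/2))) (at 0)"
    using comp_deriv[OF dz2 z2 dn2, of "M$1$1" "X$1$1" "M$1$2" "X$2$1" "X$1$2" "X$2$2"]
    unfolding F_def dmob_def vk_def den_def det_2 X by (simp add: algebra_simps)
  have fe: "(\<lambda>t. Phi (s + t * tau) (M ** (mat 1 + t *\<^sub>R X))) = (\<lambda>t. (F Z1 (of_real t), F Z2 (of_real t)))"
    by (rule ext) (simp add: Phi_def act_def mob_def Mentries wpt_def F_def Z1_def Z2_def
        algebra_simps flip: exp_of_real)
  have "((\<lambda>t. (F Z1 (of_real t), F Z2 (of_real t))) has_vector_derivative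
      Lact M (wpt s) (Vv s tau a b c)) (at 0)"
    using has_vector_derivative_Pair[OF has_vector_derivative_real_field[of "F Z1" _ 0]
        has_vector_derivative_real_field[of "F Z2" _ 0]] D1 D2
    by (simp add: Lact_def Vv_def)
  thus ?thesis unfolding X_def[symmetric] fe .
qed

lemma dPhi_eq:
  assumes "det M > 0"
  shows "dPhi s M tau a b c = Lact M (wpt s) (Vv s tau a b c)"
  unfolding dPhi_def by (rule vector_derivative_at[OF dPhi_has[OF assms]])




lemma open_M2: "open M2"
proof -
  have "M2 = {p. 0 < Im (fst p)} \<inter> {p. 0 < Im (snd p)} \<inter> {p. fst p \<noteq> snd p}"
    by (auto simp: M2_def H2_def)
  moreover have "open {p::complex\<times>complex. 0 < Im (fst p)}"
    by (intro open_Collect_less continuous_intros)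
  moreover have "open {p::complex\<times>complex. 0 < Im (snd p)}"
    by (intro open_Collect_less continuous_intros)
  moreover have "open {p::complex\<times>complex. fst p \<noteq> snd p}"
    by (intro open_Collect_neq continuous_intros)
  ultimately show ?thesis by (metis open_Int)
qed

lemma wpt_M2: "s > 0 \<Longrightarrow> wpt s \<in> M2"
  by (auto simp: wpt_def M2_def H2_def complex_eq_iff)

definition wd :: "real \<Rightarrow> complex \<times> complex" where
  "wd x = (\<i> * of_real (exp (x/2) / 2), - \<i> * of_real (exp (-x/2) / 2))"

lemma wpt_deriv: "(wpt has_vector_derivative wd x) (at x)"
proof -
  have 1: "((\<lambda>x. \<i> * complex_of_real (exp (x/2))) has_vector_derivative \<i> * of_real (exp (x/2) / 2)) (at x)"
    by (auto intro!: derivative_eq_intros)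
  have 2: "((\<lambda>x. \<i> * complex_of_real (exp (-x/2))) has_vector_derivative - \<i> * of_real (exp (-x/2) / 2)) (at x)"
    by (auto intro!: derivative_eq_intros)
  show ?thesis using has_vector_derivative_Pair[OF 1 2]
    by (simp add: wpt_def[abs_def] wd_def)
qed

lemma Ck_expc: "open T \<Longrightarrow> Ck_on k T (\<lambda>x::real. K * exp (c * x))"
  by (intro Ck_mult Ck_const Ck_exp)

lemma wd_comp: "wd x \<bullet> b = exp ((1/2) * x) * (Im (fst b) / 2) + exp ((-1/2) * x) * (- Im (snd b) / 2)"
  by (cases b) (simp add: wd_def inner_Pair inner_complex_def algebra_simps)

lemma Ck_wd: "Ck_on k {0<..} (\<lambda>x. wd x \<bullet> b)"
proof -
  have "Ck_on k {0<..} (\<lambda>x. exp ((1/2) * x) * (Im (fst b) / 2) + exp ((-1/2) * x) * (- Im (snd b) / 2))"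
    by (intro Ck_add Ck_mult Ck_exp Ck_const) auto
  thus ?thesis by (simp only: wd_comp)
qed


definition PR :: "real \<Rightarrow> complex \<times> complex \<Rightarrow> real" where
  "PR u v = (Re (fst v) / u + Re (snd v) * u) / 2"
definition PI :: "real \<Rightarrow> complex \<times> complex \<Rightarrow> real" where
  "PI u v = (Im (fst v) / u + Im (snd v) * u) / 2"
definition MR :: "real \<Rightarrow> complex \<times> complex \<Rightarrow> real" where
  "MR u v = (Re (fst v) / u - Re (snd v) * u) / 2"
definition MI :: "real \<Rightarrow> complex \<times> complex \<Rightarrow> real" where
  "MI u v = (Im (fst v) / u - Im (snd v) * u) / 2"
definition E1 :: "real \<Rightarrow> complex \<times> complex" where
  "E1 u = (of_real u, of_real (1/u))"
definition E2 :: "real \<Rightarrow> complex \<times> complex" where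
  "E2 u = (of_real u, - of_real (1/u))"

lemma decomp:
  assumes "u > 0"
  shows "v = PR u v *\<^sub>R E1 u + PI u v *\<^sub>R Jc (E1 u) + MR u v *\<^sub>R E2 u + MI u v *\<^sub>R Jc (E2 u)"
  using assms
  by (cases v) (simp add: prod_eq_iff complex_eq_iff PR_def PI_def MR_def MI_def Jc_def E1_def E2_def
      field_simps)

lemma bilin4:
  assumes B: "bilinear B" and h: "B F1 F1 = a" "B F2 F2 = a" "B F3 F3 = b" "B F4 F4 = b"
   "B F1 F2 = 0" "B F2 F1 = 0" "B F1 F3 = 0" "B F3 F1 = 0" "B F1 F4 = 0" "B F4 F1 = 0"
   "B F2 F3 = 0" "B F3 F2 = 0" "B F2 F4 = 0" "B F4 F2 = 0" "B F3 F4 = 0" "B F4 F3 = 0"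
   and v: "v = c1 *\<^sub>R F1 + c2 *\<^sub>R F2 + c3 *\<^sub>R F3 + c4 *\<^sub>R F4"
   and w: "w = d1 *\<^sub>R F1 + d2 *\<^sub>R F2 + d3 *\<^sub>R F3 + d4 *\<^sub>R F4"
  shows "B v w = a * (c1*d1 + c2*d2) + b * (c3*d3 + c4*d4)"
  unfolding v w
  by (simp add: bilinear_ladd[OF B] bilinear_radd[OF B] bilinear_lmul[OF B] bilinear_rmul[OF B] h
      algebra_simps)

definition Rm :: "real^2^2" where "Rm = vector [vector [0, 1], vector [-1, 0]]"

definition sig :: "real \<Rightarrow> complex \<times> complex \<Rightarrow> complex \<times> complex" where
  "sig u v = (- of_real (u^2) * snd v, - fst v / of_real (u^2))"

lemma Rm_facts:
  shows "det Rm = 1" "act Rm (wpt s) = swapP (wpt s)"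
    "swapP (Lact Rm (wpt s) v) = sig (exp (s/2)) v"
proof -
  show "det Rm = 1" by (simp add: Rm_def det_2)
  show "act Rm (wpt s) = swapP (wpt s)"
    by (simp add: Rm_def act_def mob_def wpt_def swapP_def field_simps exp_minus)
  have e: "exp (-(s/2)) = 1 / exp (s/2)" by (simp add: exp_minus field_simps)
  show "swapP (Lact Rm (wpt s) v) = sig (exp (s/2)) v"
    by (simp add: Rm_def Lact_def dmob_def den_def det_2 wpt_def swapP_def sig_def e power2_eq_square
        field_simps)
qed

definition alf where "alf \<gamma> s = \<gamma> (wpt s) (E1 (exp (s/2))) (E1 (exp (s/2)))"
definition bet where "bet \<gamma> s = \<gamma> (wpt s) (E2 (exp (s/2))) (E2 (exp (s/2)))"

context
  fixes \<gamma> :: "complex \<times> complex \<Rightarrow> complex \<times> complex \<Rightarrow> complex \<times> complex \<Rightarrow> real"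
  assumes K: "kaehler_metric M2 \<gamma>" and G: "G_invariant \<gamma>"
begin

lemma g_bil: "p \<in> M2 \<Longrightarrow> bilinear (\<gamma> p)"
  using K by (simp add: kaehler_metric_def riemannian_metric_def)

lemma g_sym: "p \<in> M2 \<Longrightarrow> \<gamma> p v w = \<gamma> p w v"
  using K unfolding kaehler_metric_def riemannian_metric_def by blast

lemma g_J: "p \<in> M2 \<Longrightarrow> \<gamma> p (Jc v) (Jc w) = \<gamma> p v w"
  using K unfolding kaehler_metric_def by blast

lemma g_closed: "p \<in> M2 \<Longrightarrow> d2form (kform \<gamma>) p u v x = 0"
  using K unfolding kaehler_metric_def by blast

lemma g_smooth: "b \<in> Basis \<Longrightarrow> b' \<in> Basis \<Longrightarrow> Ck_on k M2 (\<lambda>p. \<gamma> p b b')"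
  using K by (simp add: kaehler_metric_def riemannian_metric_def smooth_on_def)

lemma g_wpt_smooth: "b \<in> Basis \<Longrightarrow> b' \<in> Basis \<Longrightarrow> Ck_on k {0<..} (\<lambda>x. \<gamma> (wpt x) b b')"
  by (rule Ck_chain[OF open_M2 open_greaterThan _ wpt_deriv Ck_wd g_smooth])
    (auto simp: wpt_M2)

lemma g_sig:
  assumes "s > 0"
  shows "\<gamma> (wpt s) (sig (exp (s/2)) v) (sig (exp (s/2)) w) = \<gamma> (wpt s) v w"
proof -
  have p: "wpt s \<in> M2" using wpt_M2[OF assms] .
  have q: "swapP (wpt s) \<in> M2" using p by (auto simp: M2_def swapP_def)
  have "\<gamma> (swapP (swapP (wpt s))) (swapP (Lact Rm (wpt s) v)) (swapP (Lact Rm (wpt s) w))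
      = \<gamma> (swapP (wpt s)) (Lact Rm (wpt s) v) (Lact Rm (wpt s) w)"
    using G q unfolding G_invariant_def by blast
  also have "\<dots> = \<gamma> (wpt s) v w"
    using invariance[OF G, of Rm "wpt s" v w] p by (simp add: Rm_facts)
  moreover have "swapP (swapP x) = x" for x by (simp add: swapP_def)
  ultimately show ?thesis by (simp only: Rm_facts(3))
qed

lemma formula:
  assumes "s > 0"
  shows "\<gamma> (wpt s) v w = alf \<gamma> s * (PR (exp (s/2)) v * PR (exp (s/2)) w + PI (exp (s/2)) v * PI (exp (s/2)) w)
     + bet \<gamma> s * (MR (exp (s/2)) v * MR (exp (s/2)) w + MI (exp (s/2)) v * MI (exp (s/2)) w)"
proof -
  define u where "u = exp (s/2)"
  have u: "u > 0" by (simp add: u_def)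
  define p where "p = wpt s"
  have p: "p \<in> M2" unfolding p_def using wpt_M2[OF assms] .
  note B = g_bil[OF p]
  have JJ: "Jc (Jc x) = - x" for x by (cases x) (simp add: Jc_def)
  have sJ: "sig u (Jc x) = Jc (sig u x)" for x by (simp add: Jc_def sig_def)
  have s1: "sig u (E1 u) = - E1 u" and s2: "sig u (E2 u) = E2 u"
    using u by (simp_all add: sig_def E1_def E2_def power2_eq_square field_simps)
  have S: "\<gamma> p (sig u x) (sig u y) = \<gamma> p x y" for x y
    using g_sig[OF assms] unfolding p_def u_def .
  have zJ: "\<gamma> p x (Jc x) = 0" for x
  proof -
    have "\<gamma> p x (Jc x) = \<gamma> p (Jc x) (Jc (Jc x))" using g_J[OF p] by simp
    also have "\<dots> = - \<gamma> p (Jc x) x" by (simp add: JJ bilinear_rneg[OF B])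
    also have "\<dots> = - \<gamma> p x (Jc x)" using g_sym[OF p] by simp
    finally show ?thesis by simp
  qed
  have zS: "\<gamma> p x y = 0" if "sig u x = - x" "sig u y = y" for x y
  proof -
    have "\<gamma> p x y = \<gamma> p (sig u x) (sig u y)" using S by simp
    also have "\<dots> = - \<gamma> p x y" using that by (simp add: bilinear_lneg[OF B])
    finally show ?thesis by simp
  qed
  have sJ1: "sig u (Jc (E1 u)) = - Jc (E1 u)" unfolding sJ s1 by (simp add: Jc_def E1_def)
  have sJ2: "sig u (Jc (E2 u)) = Jc (E2 u)" by (simp add: sJ s2)
  have d: "\<gamma> p (E1 u) (E1 u) = alf \<gamma> s" "\<gamma> p (Jc (E1 u)) (Jc (E1 u)) = alf \<gamma> s"
     "\<gamma> p (E2 u) (E2 u) = bet \<gamma> s" "\<gamma> p (Jc (E2 u)) (Jc (E2 u)) = bet \<gamma> s"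
    using g_J[OF p] unfolding alf_def bet_def p_def u_def by simp_all
  have z: "\<gamma> p (E1 u) (Jc (E1 u)) = 0" "\<gamma> p (Jc (E1 u)) (E1 u) = 0"
    "\<gamma> p (E2 u) (Jc (E2 u)) = 0" "\<gamma> p (Jc (E2 u)) (E2 u) = 0"
    "\<gamma> p (E1 u) (E2 u) = 0" "\<gamma> p (E1 u) (Jc (E2 u)) = 0"
    "\<gamma> p (Jc (E1 u)) (E2 u) = 0" "\<gamma> p (Jc (E1 u)) (Jc (E2 u)) = 0"
    using zJ g_sym[OF p] zS s1 s2 sJ1 sJ2 by metis+
  have z2: "\<gamma> p (E2 u) (E1 u) = 0" "\<gamma> p (Jc (E2 u)) (E1 u) = 0"
    "\<gamma> p (E2 u) (Jc (E1 u)) = 0" "\<gamma> p (Jc (E2 u)) (Jc (E1 u)) = 0"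
    using z g_sym[OF p] by metis+
  show ?thesis
    unfolding u_def[symmetric] p_def[symmetric]
    by (rule bilin4[OF B d(1,2,3,4) z(1,2,5) z2(1) z(6) z2(2) z(7) z2(3) z(8) z2(4) z(3,4)
          decomp[OF u, of v] decomp[OF u, of w]])
qed

end




lemma Vv_explicit:
  "Vv s tau a b c = (Complex (a + b + (a - b) * (exp (s/2))^2) (exp (s/2) * (tau/2 + 2*c)),
                     Complex (a + b + (a - b) / (exp (s/2))^2) ((2*c - tau/2) / exp (s/2)))"
proof -
  have e: "exp (-(s/2)) = 1 / exp (s/2)" by (simp add: exp_minus field_simps)
  show ?thesis
    by (simp add: Vv_def vk_def wpt_def complex_eq_iff power2_eq_square e field_simps)
qed

lemma dir_deriv:
  fixes F :: "'a::real_normed_vector \<Rightarrow> real"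
  assumes F: "(F has_derivative F') (at p)" and c: "(c has_vector_derivative v) (at 0)" "c 0 = p"
    and d: "d > 0" "\<And>t. \<bar>t\<bar> < d \<Longrightarrow> F (c t) = h t"
    and h: "(h has_real_derivative D) (at 0)"
  shows "F' v = D"
proof -
  have cd: "(c has_derivative (\<lambda>t. t *\<^sub>R v)) (at 0)" using c(1) by (simp add: has_vector_derivative_def)
  have "((\<lambda>t. F (c t)) has_derivative (\<lambda>t. F' (t *\<^sub>R v))) (at 0)"
    using diff_chain_at[OF cd, of F F'] F c(2) by (simp add: o_def)
  moreover have "(\<lambda>t. F' (t *\<^sub>R v)) = (*) (F' v)"
    using linear_scale[OF has_derivative_linear[OF F]] by (auto simp: mult.commute)
  ultimately have "((\<lambda>t. F (c t)) has_real_derivative F' v) (at 0)"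
    by (simp add: has_field_derivative_def)
  hence "(h has_real_derivative F' v) (at 0)"
    by (rule has_field_derivative_transform_within[OF _ d(1)]) (auto simp: d(2) dist_real_def)
  thus ?thesis using h DERIV_unique by blast
qed

lemma bil_expand:
  fixes B :: "'a::euclidean_space \<Rightarrow> 'b::euclidean_space \<Rightarrow> real"
  assumes "bilinear B"
  shows "B y x = (\<Sum>(b,b')\<in>Basis\<times>Basis. (y \<bullet> b) * (x \<bullet> b') * B b b')"
proof -
  have "B y x = B (\<Sum>b\<in>Basis. (y \<bullet> b) *\<^sub>R b) (\<Sum>b\<in>Basis. (x \<bullet> b) *\<^sub>R b)"
    by (simp add: euclidean_representation)
  also have "\<dots> = (\<Sum>(b,b')\<in>Basis\<times>Basis. B ((y \<bullet> b) *\<^sub>R b) ((x \<bullet> b') *\<^sub>R b'))"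
    by (rule bilinear_sum[OF assms])
  also have "\<dots> = (\<Sum>(b,b')\<in>Basis\<times>Basis. (y \<bullet> b) * (x \<bullet> b') * B b b')"
    by (rule sum.cong) (auto simp: bilinear_lmul[OF assms] bilinear_rmul[OF assms])
  finally show ?thesis .
qed

definition Linv :: "real^2^2 \<Rightarrow> complex \<times> complex \<Rightarrow> complex \<times> complex \<Rightarrow> complex \<times> complex" where
  "Linv M p h = (fst h / dmob M (fst p), snd h / dmob M (snd p))"


lemma act_id: "act (mat 1) q = q"
  by (simp add: act_def mob_def mat_def)

lemma Lact_id: "Lact (mat 1) q h = h"
  unfolding Lact_def dmob_def den_def det_I by (simp add: mat_def)

lemma Jc_add: "Jc (x + y) = Jc x + Jc y" and Jc_scale: "Jc (r *\<^sub>R x) = r *\<^sub>R Jc x"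
  by (simp_all add: Jc_def algebra_simps scaleR_conv_of_real)

context
  fixes \<gamma> :: "complex \<times> complex \<Rightarrow> complex \<times> complex \<Rightarrow> complex \<times> complex \<Rightarrow> real"
  assumes K: "kaehler_metric M2 \<gamma>" and G: "G_invariant \<gamma>"
begin

lemma kform_has_deriv:
  assumes p: "p \<in> M2"
  shows "((\<lambda>q. kform \<gamma> q v x) has_derivative frechet_derivative (\<lambda>q. kform \<gamma> q v x) (at p)) (at p)"
proof -
  have e: "kform \<gamma> q v x = (\<Sum>(b,b')\<in>Basis\<times>Basis. (Jc v \<bullet> b) * (x \<bullet> b') * \<gamma> q b b')" if "q \<in> M2" for q
    unfolding kform_def by (rule bil_expand[OF g_bil[OF K G that]])
  have "(\<lambda>q. \<gamma> q b b') differentiable (at p)" if "b \<in> Basis" "b' \<in> Basis" for b b'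
    using g_smooth[OF K G that, of 1] p by simp
  hence "(\<lambda>q. \<Sum>(b,b')\<in>Basis\<times>Basis. (Jc v \<bullet> b) * (x \<bullet> b') * \<gamma> q b b') differentiable (at p)"
    by (auto intro!: differentiable_sum differentiable_mult differentiable_const)
  hence "(\<lambda>q. kform \<gamma> q v x) differentiable (at p)"
    using differentiable_cong_open[OF open_M2 p e] by simp
  thus ?thesis using frechet_derivative_works by blast
qed

lemma dmob_nz: "det N > 0 \<Longrightarrow> Im z > 0 \<Longrightarrow> dmob N z \<noteq> 0"
  using den_nonzero[of N z] by (simp add: dmob_def)

lemma inv_Linv:
  assumes "det N > 0" "p \<in> M2"
  shows "\<gamma> (act N p) v w = \<gamma> p (Linv N p v) (Linv N p w)"
proof -
  have nz: "dmob N (fst p) \<noteq> 0" "dmob N (snd p) \<noteq> 0"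
    using assms dmob_nz by (auto simp: M2_def H2_def)
  have "Lact N p (Linv N p h) = h" for h using nz by (simp add: Lact_def Linv_def)
  thus ?thesis using invariance[OF G assms, of "Linv N p v" "Linv N p w"] by simp
qed

lemma kform_bil: "p \<in> M2 \<Longrightarrow> bilinear (kform \<gamma> p)"
proof -
  assume p: "p \<in> M2"
  note B = g_bil[OF K G p]
  show ?thesis
    unfolding bilinear_def linear_iff kform_def
    by (simp add: Jc_add Jc_scale bilinear_ladd[OF B] bilinear_radd[OF B]
        bilinear_lmul[OF B] bilinear_rmul[OF B])
qed

lemma sl2_dir:
  assumes s: "s > 0" and d: "d > 0"
    and N: "\<And>t. \<bar>t\<bar> < d \<Longrightarrow> det (mat 1 ** (mat 1 + t *\<^sub>R (a *\<^sub>R e1 + b *\<^sub>R e2 + c *\<^sub>R e3))) > 0"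
    and L: "\<And>t h. \<bar>t\<bar> < d \<Longrightarrow> Linv (mat 1 ** (mat 1 + t *\<^sub>R (a *\<^sub>R e1 + b *\<^sub>R e2 + c *\<^sub>R e3))) (wpt s) h
          = (fst h * k1 (of_real t), snd h * k2 (of_real t))"
    and k1: "(k1 has_field_derivative K1) (at 0)" "k1 0 = 1"
    and k2: "(k2 has_field_derivative K2) (at 0)" "k2 0 = 1"
  shows "frechet_derivative (\<lambda>q. kform \<gamma> q v x) (at (wpt s)) (Vv s 0 a b c)
     = kform \<gamma> (wpt s) v (K1 * fst x, K2 * snd x) + kform \<gamma> (wpt s) (K1 * fst v, K2 * snd v) x"
proof -
  define p where "p = wpt s"
  have p: "p \<in> M2" using wpt_M2[OF s] by (simp add: p_def)
  define X where "X = a *\<^sub>R e1 + b *\<^sub>R e2 + c *\<^sub>R e3"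
  define f where "f = (\<lambda>h t. (fst h * k1 (of_real t), snd h * k2 (of_real t)))"
  define h where "h = (\<lambda>t. kform \<gamma> p (f v t) (f x t))"
  have cv: "((\<lambda>t. Phi (s + t * 0) (mat 1 ** (mat 1 + t *\<^sub>R X))) has_vector_derivative Vv s 0 a b c) (at 0)"
    using dPhi_has[of "mat 1" s 0 a b c] by (simp add: det_I Lact_id X_def)
  have c0: "Phi (s + 0 * 0) (mat 1 ** (mat 1 + 0 *\<^sub>R X)) = p"
    by (simp add: Phi_def act_id p_def)
  have fd: "((\<lambda>t. f h t) has_vector_derivative (K1 * fst h, K2 * snd h)) (at 0)" for h
  proof -
    have 1: "((\<lambda>w. fst h * k1 w) has_field_derivative fst h * K1) (at (of_real 0))"
      using k1(1) by (auto intro!: derivative_eq_intros)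
    have 2: "((\<lambda>w. snd h * k2 w) has_field_derivative snd h * K2) (at (of_real 0))"
      using k2(1) by (auto intro!: derivative_eq_intros)
    show ?thesis
      using has_vector_derivative_Pair[OF has_vector_derivative_real_field[OF 1]
          has_vector_derivative_real_field[OF 2]]
      by (simp add: f_def mult.commute)
  qed
  have f0: "f h 0 = h" for h by (simp add: f_def k1 k2)
  have bb: "bounded_bilinear (kform \<gamma> p)"
    using kform_bil[OF p] bilinear_conv_bounded_bilinear by blast
  have hd: "(h has_real_derivative
      (kform \<gamma> p v (K1 * fst x, K2 * snd x) + kform \<gamma> p (K1 * fst v, K2 * snd v) x)) (at 0)"
    unfolding has_real_derivative_iff_has_vector_derivative h_def
    using bounded_bilinear.has_vector_derivative[OF bb fd fd] by (simp add: f0)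
  have eq: "kform \<gamma> (Phi (s + t * 0) (mat 1 ** (mat 1 + t *\<^sub>R X))) v x = h t" if t: "\<bar>t\<bar> < d" for t
  proof -
    define q where "q = Phi (s + t * 0) (mat 1 ** (mat 1 + t *\<^sub>R X))"
    define Nt where "Nt = mat 1 ** (mat 1 + t *\<^sub>R X)"
    have q': "q = act Nt p" by (simp add: q_def Phi_def Nt_def p_def)
    have dN: "det Nt > 0" using N[OF t] by (simp add: Nt_def X_def)
    have Lf: "Linv Nt p y = f y t" for y using L[OF t] by (simp add: Nt_def X_def p_def f_def)
    have "kform \<gamma> q v x = \<gamma> p (Linv Nt p (Jc v)) (Linv Nt p x)"
      unfolding q' kform_def by (rule inv_Linv[OF dN p])
    also have "\<dots> = h t" by (simp add: Lf h_def kform_def f_def Jc_def mult_ac)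
    finally show ?thesis unfolding q_def .
  qed
  show ?thesis
    unfolding p_def[symmetric]
    by (rule dir_deriv[OF kform_has_deriv[OF p] cv c0 d eq hd])
qed

lemma s_dir:
  assumes s: "s > 0"
    and A: "(alf \<gamma> has_real_derivative A') (at s)" and B: "(bet \<gamma> has_real_derivative B') (at s)"
  shows "frechet_derivative (\<lambda>q. kform \<gamma> q (Vv s 0 1 0 0) (Vv s 0 0 0 1)) (at (wpt s)) (Vv s 1 0 0 0)
     = 2 * (exp (s/2) + 1 / exp (s/2)) * A'"
proof -
  define p where "p = wpt s"
  have p: "p \<in> M2" using wpt_M2[OF s] by (simp add: p_def)
  have cv: "((\<lambda>t. Phi (s + t * 1) (mat 1 ** (mat 1 + t *\<^sub>R (0 *\<^sub>R e1 + 0 *\<^sub>R e2 + 0 *\<^sub>R e3))))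
      has_vector_derivative Vv s 1 0 0 0) (at 0)"
    using dPhi_has[of "mat 1" s 1 0 0 0] by (simp add: det_I Lact_id)
  have c0: "Phi (s + 0 * 1) (mat 1 ** (mat 1 + 0 *\<^sub>R (0 *\<^sub>R e1 + 0 *\<^sub>R e2 + 0 *\<^sub>R e3))) = p"
    by (simp add: Phi_def act_id p_def)
  have A': "((\<lambda>t. alf \<gamma> (t + s)) has_real_derivative A') (at 0)"
    using A DERIV_shift[of "alf \<gamma>" A' 0 s] by simp
  have B': "((\<lambda>t. bet \<gamma> (t + s)) has_real_derivative B') (at 0)"
    using B DERIV_shift[of "bet \<gamma>" B' 0 s] by simp
  define h where "h = (\<lambda>t. alf \<gamma> (t + s) *
      (((1 + (exp (s/2))^2) / exp ((t + s)/2) + (1 + 1/(exp (s/2))^2) * exp ((t + s)/2)) / 2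
       * ((2 * exp (s/2) / exp ((t + s)/2) + 2 / exp (s/2) * exp ((t + s)/2)) / 2))
    + bet \<gamma> (t + s) *
      (((1 + (exp (s/2))^2) / exp ((t + s)/2) - (1 + 1/(exp (s/2))^2) * exp ((t + s)/2)) / 2
       * ((2 * exp (s/2) / exp ((t + s)/2) - 2 / exp (s/2) * exp ((t + s)/2)) / 2)))"
  have hd: "(h has_real_derivative 2 * (exp (s/2) + 1 / exp (s/2)) * A') (at 0)"
    unfolding h_def
    by (auto intro!: derivative_eq_intros A' B' simp: field_simps power2_eq_square)
  have eq: "kform \<gamma> (Phi (s + t * 1) (mat 1 ** (mat 1 + t *\<^sub>R (0 *\<^sub>R e1 + 0 *\<^sub>R e2 + 0 *\<^sub>R e3))))
      (Vv s 0 1 0 0) (Vv s 0 0 0 1) = h t" if t: "\<bar>t\<bar> < s" for t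
  proof -
    have st: "s + t > 0" using t by auto
    have "kform \<gamma> (Phi (s + t * 1) (mat 1 ** (mat 1 + t *\<^sub>R (0 *\<^sub>R e1 + 0 *\<^sub>R e2 + 0 *\<^sub>R e3))))
      (Vv s 0 1 0 0) (Vv s 0 0 0 1) = \<gamma> (wpt (s + t)) (Jc (Vv s 0 1 0 0)) (Vv s 0 0 0 1)"
      by (simp add: Phi_def act_id kform_def)
    also have "\<dots> = h t"
      unfolding formula[OF K G st] h_def
      by (simp add: Vv_explicit Jc_def PR_def PI_def MR_def MI_def add.commute) (simp add: mult_ac)
    finally show ?thesis .
  qed
  show ?thesis
    unfolding p_def[symmetric]
    by (rule dir_deriv[OF kform_has_deriv[OF p] cv c0 s eq hd])
qed

lemma aux3:
  fixes x a :: complex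
  assumes "1 - x \<noteq> 0" "1 + x \<noteq> 0"
  shows "a / ((1 + x) * (1 - x) / (1 - x)^2) = a * ((1 - x) / (1 + x))"
proof -
  have "(1 + x) * (1 - x) / (1 - x)^2 = (1 + x) * (1 - x) / ((1 - x) * (1 - x))"
    by (simp add: power2_eq_square)
  also have "\<dots> = (1 + x) / (1 - x)"
    using assms(1) by (rule nonzero_mult_divide_mult_cancel_right)
  finally have e: "(1 + x) * (1 - x) / (1 - x)^2 = (1 + x) / (1 - x)" .
  show ?thesis unfolding e by simp
qed

lemma relation:
  assumes s: "s > 0"
    and A: "(alf \<gamma> has_real_derivative A') (at s)" and B: "(bet \<gamma> has_real_derivative B') (at s)"
  shows "2 * (exp (s/2) + 1 / exp (s/2)) * A' + (exp (s/2) - 1 / exp (s/2)) * (alf \<gamma> s - bet \<gamma> s) = 0"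
proof -
  define u where "u = exp (s/2)"
  have u: "u > 0" by (simp add: u_def)
  have e: "exp (-(s/2)) = 1 / u" by (simp add: exp_minus u_def field_simps)
  define p where "p = wpt s"
  have p: "p \<in> M2" using wpt_M2[OF s] by (simp add: p_def)
  define Us where "Us = Vv s 1 0 0 0"
  define Y1 where "Y1 = Vv s 0 1 0 0"
  define Y3 where "Y3 = Vv s 0 0 0 1"
  define z1 where "z1 = fst p"
  define z2 where "z2 = snd p"
  have z: "z1 = \<i> * of_real u" "z2 = \<i> * of_real (1/u)"
    by (simp_all add: z1_def z2_def p_def wpt_def e u_def)
  have det1: "det (mat 1 ** (mat 1 + t *\<^sub>R (1 *\<^sub>R e1 + 0 *\<^sub>R e2 + 0 *\<^sub>R e3))) = 1 - t^2" for t
    unfolding det_2 Mentries by (simp add: mat_def e1_def e2_def e3_def power2_eq_square)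
  have ent1: "(mat 1 ** (mat 1 + t *\<^sub>R (1 *\<^sub>R e1 + 0 *\<^sub>R e2 + 0 *\<^sub>R e3)))$2$1 = t"
    "(mat 1 ** (mat 1 + t *\<^sub>R (1 *\<^sub>R e1 + 0 *\<^sub>R e2 + 0 *\<^sub>R e3)))$2$2 = 1" for t
    unfolding Mentries by (simp_all add: mat_def e1_def e2_def e3_def)
  have T2: "frechet_derivative (\<lambda>q. kform \<gamma> q Y3 Us) (at p) Y1
      = kform \<gamma> p Y3 (2 * z1 * fst Us, 2 * z2 * snd Us) + kform \<gamma> p (2 * z1 * fst Y3, 2 * z2 * snd Y3) Us"
    unfolding Y1_def p_def z1_def z2_def
  proof (rule sl2_dir[OF s, of "1/2" 1 0 0 "\<lambda>w. (w * fst (wpt s) + 1)^2 / (1 - w^2)"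
        "\<lambda>w. (w * snd (wpt s) + 1)^2 / (1 - w^2)"])
    fix t :: real assume t: "\<bar>t\<bar> < 1/2"
    hence t2: "t^2 < 1" by (simp add: abs_square_less_1)
    show "det (mat 1 ** (mat 1 + t *\<^sub>R (1 *\<^sub>R e1 + 0 *\<^sub>R e2 + 0 *\<^sub>R e3))) > 0"
      unfolding det1 using t2 by simp
    fix h :: "complex \<times> complex"
    show "Linv (mat 1 ** (mat 1 + t *\<^sub>R (1 *\<^sub>R e1 + 0 *\<^sub>R e2 + 0 *\<^sub>R e3))) (wpt s) h =
      (fst h * (\<lambda>w. (w * fst (wpt s) + 1)^2 / (1 - w^2)) (of_real t),
       snd h * (\<lambda>w. (w * snd (wpt s) + 1)^2 / (1 - w^2)) (of_real t))"
      unfolding Linv_def dmob_def den_def det1 ent1 by simp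
  next
    show "((\<lambda>w. (w * fst (wpt s) + 1)^2 / (1 - w^2)) has_field_derivative 2 * fst (wpt s)) (at 0)"
      by (auto intro!: derivative_eq_intros)
    show "((\<lambda>w. (w * snd (wpt s) + 1)^2 / (1 - w^2)) has_field_derivative 2 * snd (wpt s)) (at 0)"
      by (auto intro!: derivative_eq_intros)
  qed simp_all
  have det3: "det (mat 1 ** (mat 1 + t *\<^sub>R (0 *\<^sub>R e1 + 0 *\<^sub>R e2 + 1 *\<^sub>R e3))) = (1 + t) * (1 - t)" for t
    unfolding det_2 Mentries by (simp add: mat_def e1_def e2_def e3_def algebra_simps)
  have ent3: "(mat 1 ** (mat 1 + t *\<^sub>R (0 *\<^sub>R e1 + 0 *\<^sub>R e2 + 1 *\<^sub>R e3)))$2$1 = 0"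
    "(mat 1 ** (mat 1 + t *\<^sub>R (0 *\<^sub>R e1 + 0 *\<^sub>R e2 + 1 *\<^sub>R e3)))$2$2 = 1 - t" for t
    unfolding Mentries by (simp_all add: mat_def e1_def e2_def e3_def)
  have T3: "frechet_derivative (\<lambda>q. kform \<gamma> q Us Y1) (at p) Y3
      = kform \<gamma> p Us (-2 * fst Y1, -2 * snd Y1) + kform \<gamma> p (-2 * fst Us, -2 * snd Us) Y1"
    unfolding Y3_def p_def
  proof (rule sl2_dir[OF s, of "1/2" 0 0 1 "\<lambda>w. (1 - w) / (1 + w)" "\<lambda>w. (1 - w) / (1 + w)"])
    fix t :: real assume t: "\<bar>t\<bar> < 1/2"
    hence t1: "1 - t > 0" "1 + t > 0" by auto
    show "det (mat 1 ** (mat 1 + t *\<^sub>R (0 *\<^sub>R e1 + 0 *\<^sub>R e2 + 1 *\<^sub>R e3))) > 0"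
      unfolding det3 using t1 by simp
    fix h :: "complex \<times> complex"
    have nz: "(1 - complex_of_real t) \<noteq> 0" "(1 + complex_of_real t) \<noteq> 0"
      using t1 by (auto simp: complex_eq_iff)
    have dm: "dmob (mat 1 ** (mat 1 + t *\<^sub>R (0 *\<^sub>R e1 + 0 *\<^sub>R e2 + 1 *\<^sub>R e3))) z
        = (1 + of_real t) * (1 - of_real t) / (1 - of_real t)^2" for z
      unfolding dmob_def den_def det3 ent3 by simp
    show "Linv (mat 1 ** (mat 1 + t *\<^sub>R (0 *\<^sub>R e1 + 0 *\<^sub>R e2 + 1 *\<^sub>R e3))) (wpt s) h =
      (fst h * (\<lambda>w. (1 - w) / (1 + w)) (of_real t), snd h * (\<lambda>w. (1 - w) / (1 + w)) (of_real t))"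
      unfolding Linv_def dm aux3[OF nz] by simp
  next
    show "((\<lambda>w. (1 - w) / (1 + w)) has_field_derivative -2) (at 0)"
      by (auto intro!: derivative_eq_intros)
    show "((\<lambda>w. (1 - w) / (1 + w)) has_field_derivative -2) (at 0)"
      by (auto intro!: derivative_eq_intros)
  qed simp_all
  have T1: "frechet_derivative (\<lambda>q. kform \<gamma> q Y1 Y3) (at p) Us = 2 * (u + 1 / u) * A'"
    unfolding Y1_def Y3_def Us_def p_def u_def by (rule s_dir[OF s A B])
  have v2: "kform \<gamma> p Y3 (2 * z1 * fst Us, 2 * z2 * snd Us) + kform \<gamma> p (2 * z1 * fst Y3, 2 * z2 * snd Y3) Us
     = (u - 1/u) * (alf \<gamma> s - bet \<gamma> s)"
    unfolding kform_def p_def formula[OF K G s] u_def[symmetric] z Us_def Y1_def Y3_def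
    using u by (simp add: Vv_explicit u_def[symmetric] Jc_def PR_def PI_def MR_def MI_def field_simps)
  have v3: "kform \<gamma> p Us (-2 * fst Y1, -2 * snd Y1) + kform \<gamma> p (-2 * fst Us, -2 * snd Us) Y1 = 0"
    unfolding kform_def p_def formula[OF K G s] u_def[symmetric] Us_def Y1_def Y3_def
    using u by (simp add: Vv_explicit u_def[symmetric] Jc_def PR_def PI_def MR_def MI_def field_simps) algebra
  have "0 = d2form (kform \<gamma>) p Us Y1 Y3" using g_closed[OF K G p] by simp
  also have "\<dots> = 2 * (u + 1 / u) * A' + (u - 1/u) * (alf \<gamma> s - bet \<gamma> s)"
    unfolding d2form_def T1 T2 T3 v2 v3 by simp
  finally show ?thesis unfolding u_def by simp
qed

end




lemma basis_10: "((1::complex), (0::complex)) \<in> (Basis :: (complex \<times> complex) set)"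
  and basis_01: "((0::complex), (1::complex)) \<in> (Basis :: (complex \<times> complex) set)"
  by (auto simp: Basis_prod_def Basis_complex_def)

lemma Ck_neg: "open T \<Longrightarrow> Ck_on k T f \<Longrightarrow> Ck_on k T (\<lambda>x::real. - f x)"
proof -
  assume T: "open T" and f: "Ck_on k T f"
  have "Ck_on k T (\<lambda>x. (-1) * f x)" by (rule Ck_mult[OF T Ck_const[OF T] f])
  thus ?thesis by simp
qed

context
  fixes \<gamma> :: "complex \<times> complex \<Rightarrow> complex \<times> complex \<Rightarrow> complex \<times> complex \<Rightarrow> real"
  assumes K: "kaehler_metric M2 \<gamma>" and G: "G_invariant \<gamma>"
begin

lemma alf_bet_expand:
  assumes x: "x > 0"
  shows "alf \<gamma> x = exp (1 * x) * \<gamma> (wpt x) (1,0) (1,0) + \<gamma> (wpt x) (1,0) (0,1)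
           + \<gamma> (wpt x) (0,1) (1,0) + exp ((-1) * x) * \<gamma> (wpt x) (0,1) (0,1)"
    and "bet \<gamma> x = exp (1 * x) * \<gamma> (wpt x) (1,0) (1,0) + (- \<gamma> (wpt x) (1,0) (0,1))
           + (- \<gamma> (wpt x) (0,1) (1,0)) + exp ((-1) * x) * \<gamma> (wpt x) (0,1) (0,1)"
proof -
  define u where "u = exp (x/2)"
  have u: "u > 0" by (simp add: u_def)
  note B = g_bil[OF K G wpt_M2[OF x]]
  have e1: "E1 u = u *\<^sub>R (1,0) + (1/u) *\<^sub>R (0,1)"
    by (simp add: E1_def scaleR_conv_of_real)
  have e2: "E2 u = u *\<^sub>R (1,0) + (- (1/u)) *\<^sub>R (0,1)"
    by (simp add: E2_def scaleR_conv_of_real)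
  have uu1: "u * u = exp (1 * x)" by (simp add: u_def flip: exp_add)
  have "exp ((-1) * x) = 1 / exp (1 * x)" by (simp add: exp_minus inverse_eq_divide)
  hence uu2: "1/u * (1/u) = exp ((-1) * x)" using uu1 by simp
  note uu = uu1 uu2
  show "alf \<gamma> x = exp (1 * x) * \<gamma> (wpt x) (1,0) (1,0) + \<gamma> (wpt x) (1,0) (0,1)
           + \<gamma> (wpt x) (0,1) (1,0) + exp ((-1) * x) * \<gamma> (wpt x) (0,1) (0,1)"
    unfolding alf_def u_def[symmetric] e1 uu[symmetric]
      bilinear_ladd[OF B] bilinear_radd[OF B] bilinear_lmul[OF B] bilinear_rmul[OF B]
    using u by (simp add: field_simps)
  show "bet \<gamma> x = exp (1 * x) * \<gamma> (wpt x) (1,0) (1,0) + (- \<gamma> (wpt x) (1,0) (0,1))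
           + (- \<gamma> (wpt x) (0,1) (1,0)) + exp ((-1) * x) * \<gamma> (wpt x) (0,1) (0,1)"
    unfolding bet_def u_def[symmetric] e2 uu[symmetric]
      bilinear_ladd[OF B] bilinear_radd[OF B] bilinear_lmul[OF B] bilinear_rmul[OF B]
    using u by (simp add: field_simps)
qed

lemma alf_smooth: "Ck_on k {0<..} (alf \<gamma>)"
proof -
  have ck: "Ck_on k {0<..} (\<lambda>x. exp (1 * x) * \<gamma> (wpt x) (1,0) (1,0) + \<gamma> (wpt x) (1,0) (0,1)
           + \<gamma> (wpt x) (0,1) (1,0) + exp ((-1) * x) * \<gamma> (wpt x) (0,1) (0,1))" (is "Ck_on _ _ ?f")
    by (intro Ck_add Ck_mult Ck_exp g_wpt_smooth[OF K G] basis_10 basis_01 open_greaterThan)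
  have e: "alf \<gamma> x = ?f x" if "x \<in> {0<..}" for x
    using alf_bet_expand(1)[of x] that by simp
  have c: "Ck_on k {0<..} (alf \<gamma>) = Ck_on k {0<..} ?f"
    by (rule Ck_on_cong[OF open_greaterThan]) (rule e)
  show ?thesis by (rule iffD2[OF c ck])
qed

lemma bet_smooth: "Ck_on k {0<..} (bet \<gamma>)"
proof -
  have ck: "Ck_on k {0<..} (\<lambda>x. exp (1 * x) * \<gamma> (wpt x) (1,0) (1,0) + (- \<gamma> (wpt x) (1,0) (0,1))
           + (- \<gamma> (wpt x) (0,1) (1,0)) + exp ((-1) * x) * \<gamma> (wpt x) (0,1) (0,1))" (is "Ck_on _ _ ?f")
    by (intro Ck_add Ck_mult Ck_exp Ck_neg g_wpt_smooth[OF K G] basis_10 basis_01 open_greaterThan)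
  have e: "bet \<gamma> x = ?f x" if "x \<in> {0<..}" for x
    using alf_bet_expand(2)[of x] that by simp
  have c: "Ck_on k {0<..} (bet \<gamma>) = Ck_on k {0<..} ?f"
    by (rule Ck_on_cong[OF open_greaterThan]) (rule e)
  show ?thesis by (rule iffD2[OF c ck])
qed

lemma smooth_deriv: "Ck_on 1 {0<..} f \<Longrightarrow> s > 0 \<Longrightarrow> (f has_real_derivative deriv f s) (at s)"
  using DERIV_deriv_iff_real_differentiable by (simp add: Basis_real_def)

end


lemma sinh_half: "sinh ((x::real)/2) = (exp (x/2) - 1 / exp (x/2)) / 2"
  by (simp add: sinh_def exp_minus inverse_eq_divide)

lemma cosh_half: "cosh ((x::real)/2) = (exp (x/2) + 1 / exp (x/2)) / 2"
  by (simp add: cosh_def exp_minus inverse_eq_divide)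

lemma cosh_sq: "(cosh ((x::real)/2))^2 = (exp (1 * x) + 2 + exp ((-1) * x)) / 4"
proof -
  have a: "exp (x/2) * exp (x/2) = exp (1 * x)" by (simp flip: exp_add)
  have b: "exp ((-1) * x) = 1 / exp (1 * x)" by (simp add: exp_minus inverse_eq_divide)
  have p: "exp (x/2) > 0" by simp
  show ?thesis unfolding cosh_half b a[symmetric] using p
    by (simp add: power2_eq_square field_simps)
qed

theorem proposition3p1:
  fixes \<gamma> :: "complex \<times> complex \<Rightarrow> complex \<times> complex \<Rightarrow> complex \<times> complex \<Rightarrow> real"
  assumes "kaehler_metric M2 \<gamma>"
    and "G_invariant \<gamma>"
  shows "\<exists>A :: real \<Rightarrow> real. smooth_on {0<..} A \<and>
    (\<forall>s>0. \<forall>M::real^2^2. det M = 1 \<longrightarrow>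
      (\<forall>tau a b c tau' a' b' c'.
        \<gamma> (Phi s M) (dPhi s M tau a b c) (dPhi s M tau' a' b' c') =
            (1 / (8 * sinh (s/2)) * deriv (\<lambda>x. A x / cosh (x/2)) s) * tau * tau'
          + A s * a * a'
          + (2 * sinh (s/2) * deriv (\<lambda>x. A x / cosh (x/2)) s) * b * b'
          + (A s / (cosh (s/2))^2) * c * c'))"
proof -
  note K = assms(1) and G = assms(2)
  define A where "A = (\<lambda>x::real. 4 * (cosh (x/2))^2 * alf \<gamma> x)"
  have Aeq: "A = (\<lambda>x. (exp (1 * x) + 2 + exp ((-1) * x)) * alf \<gamma> x)"
    by (rule ext) (simp add: A_def cosh_sq)
  have smA: "smooth_on {0<..} A"
    unfolding smooth_on_def Aeq
    by (intro allI Ck_mult Ck_add Ck_exp Ck_const alf_smooth[OF K G] open_greaterThan)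
  have AC: "(\<lambda>x. A x / cosh (x/2)) = (\<lambda>x. 4 * cosh (x/2) * alf \<gamma> x)"
    by (rule ext) (simp add: A_def power2_eq_square)
  show ?thesis
  proof (intro exI conjI allI impI)
    show "smooth_on {0<..} A" by (rule smA)
    fix s :: real and M :: "real^2^2" and tau a b c tau' a' b' c' :: real
    assume s: "s > 0" and M: "det M = 1"
    define u where "u = exp (s/2)"
    have u1: "u > 1" using s by (simp add: u_def)
    have u0: "u > 0" using u1 by simp
    define \<alpha> where "\<alpha> = alf \<gamma> s"
    define \<beta> where "\<beta> = bet \<gamma> s"
    define \<alpha>' where "\<alpha>' = deriv (alf \<gamma>) s"
    have hA: "(alf \<gamma> has_real_derivative \<alpha>') (at s)"
      unfolding \<alpha>'_def by (rule smooth_deriv[OF K G alf_smooth[OF K G] s])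
    have hB: "(bet \<gamma> has_real_derivative deriv (bet \<gamma>) s) (at s)"
      by (rule smooth_deriv[OF K G bet_smooth[OF K G] s])
    have rel: "2 * (u + 1 / u) * \<alpha>' + (u - 1 / u) * (\<alpha> - \<beta>) = 0"
      using relation[OF K G s hA hB] unfolding u_def \<alpha>_def \<beta>_def .
    have hD: "((\<lambda>x. 4 * cosh (x/2) * alf \<gamma> x) has_real_derivative
        4 * (sinh (s/2) * (1/2)) * \<alpha> + 4 * cosh (s/2) * \<alpha>') (at s)"
      unfolding \<alpha>_def by (auto intro!: derivative_eq_intros hA)
    have D: "deriv (\<lambda>x. A x / cosh (x/2)) s = (u - 1/u) * \<beta>"
    proof -
      have "deriv (\<lambda>x. A x / cosh (x/2)) s = 4 * (sinh (s/2) * (1/2)) * \<alpha> + 4 * cosh (s/2) * \<alpha>'"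
        unfolding AC by (rule DERIV_imp_deriv[OF hD])
      also have "\<dots> = (u - 1/u) * \<alpha> + 2 * (u + 1/u) * \<alpha>'"
        by (simp add: sinh_half cosh_half u_def[symmetric] field_simps)
      also have "\<dots> = (u - 1/u) * \<beta>" using rel unfolding right_diff_distrib by linarith
      finally show ?thesis .
    qed
    have Mpos: "det M > 0" using M by simp
    have LHS: "\<gamma> (Phi s M) (dPhi s M tau a b c) (dPhi s M tau' a' b' c')
        = \<gamma> (wpt s) (Vv s tau a b c) (Vv s tau' a' b' c')"
      unfolding Phi_def dPhi_eq[OF Mpos] by (rule invariance[OF G Mpos wpt_M2[OF s]])
    have As: "A s = (u + 1/u)^2 * \<alpha>"
      by (simp add: A_def cosh_half u_def[symmetric] \<alpha>_def power2_eq_square)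
    have nz: "u * u - 1 \<noteq> 0" "u * u \<noteq> 1" "u - 1/u \<noteq> 0" using u1
      by (auto simp: field_simps) (smt (verit) mult_le_cancel_right1)+
    have V1: "PR u (Vv s t x y z) = x * (u + 1/u)" for t x y z
      unfolding Vv_explicit u_def[symmetric] PR_def using u0
      by (simp add: field_simps power2_eq_square)
    have V2: "PI u (Vv s t x y z) = 2 * z" for t x y z
      unfolding Vv_explicit u_def[symmetric] PI_def using u0
      by (simp add: field_simps power2_eq_square)
    have V3: "MR u (Vv s t x y z) = y * (1/u - u)" for t x y z
      unfolding Vv_explicit u_def[symmetric] MR_def using u0
      by (simp add: field_simps power2_eq_square)
    have V4: "MI u (Vv s t x y z) = t / 2" for t x y z
      unfolding Vv_explicit u_def[symmetric] MI_def using u0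
      by (simp add: field_simps power2_eq_square)
    note V = V1 V2 V3 V4
    have c1g: "w \<noteq> 0 \<Longrightarrow> 1 / (8 * (w / 2)) * (w * \<beta>) = \<beta> / 4" for w :: real
      by (simp add: field_simps)
    have c1: "1 / (8 * ((u - 1/u) / 2)) * ((u - 1/u) * \<beta>) = \<beta> / 4" by (rule c1g[OF nz(3)])
    have c4g: "w \<noteq> 0 \<Longrightarrow> w^2 * \<alpha> / (w / 2)^2 = 4 * \<alpha>" for w :: real
      by (simp add: field_simps power2_eq_square)
    have "u + 1/u > 0" using u0 by (intro add_pos_pos) auto
    hence c4: "(u + 1/u)^2 * \<alpha> / ((u + 1/u) / 2)^2 = 4 * \<alpha>" by (intro c4g) simp
    show "\<gamma> (Phi s M) (dPhi s M tau a b c) (dPhi s M tau' a' b' c') =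
            (1 / (8 * sinh (s/2)) * deriv (\<lambda>x. A x / cosh (x/2)) s) * tau * tau'
          + A s * a * a'
          + (2 * sinh (s/2) * deriv (\<lambda>x. A x / cosh (x/2)) s) * b * b'
          + (A s / (cosh (s/2))^2) * c * c'"
      unfolding LHS formula[OF K G s] D As
      unfolding sinh_half cosh_half u_def[symmetric] \<alpha>_def[symmetric] \<beta>_def[symmetric] V c1 c4
      using u0 by (simp add: power2_eq_square algebra_simps) (simp add: field_simps)
  qed
qed



end
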